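(* Let $n\ge 1$, $U>0$, and let $a_1,\dots,a_n,b\in\mathbb{R}$ satisfy $a_1\neq 0$, $b\neq 0$ and $\sum_{i=1}^n a_i\neq 1$. Consider the latent linear dynamic system $$\boldsymbol{z}^{t+1}=\boldsymbol{A}\boldsymbol{z}^t+\boldsymbol{B}u^t,\qquad \boldsymbol{x}^t=g(\boldsymbol{z}^t),$$ where $\boldsymbol{z}^t\in\mathbb{R}^n$, $u^t\in(-U,U)$, $\boldsymbol{A}\in\mathbb{R}^{n\times n}$ is the companion matrix whose first $n-1$ rows are $\boldsymbol{e}_2^T,\dots,\boldsymbol{e}_n^T$ (the $(i,i+1)$ entries equal $1$, all other entries of these rows $0$) and whose last row is $(a_1,a_2,\dots,a_n)$, $\boldsymbol{B}=(0,\dots,0,b)^T\in\mathbb{R}^n$, and $g:\mathbb{R}^n\to\mathcal{X}\subset\mathbb{R}^m$ ($m\ge n$) is an unknown injective differentiable function. Fix an arbitrary nonzero constant $\hat b$ and set $\boldsymbol{\hat B}=(0,\dots,0,\hat b)^T$. Let a differentiable encoder $f:\mathcal{X}\to\mathbb{R}^n$ and a matrix $\boldsymbol{\hat A}$, of the same companion form as $\boldsymbol{A}$ but with an arbitrary last row $(\hat a_1,\dots,\hat a_n)$, be a solution of $$\min_{\boldsymbol{\hat A},\,f}\ \mathbb{E}\big[\|f(\boldsymbol{x}^{t+1})-\boldsymbol{\hat A}f(\boldsymbol{x}^t)-\boldsymbol{\hat B}u^t\|^2\big],$$ where $\boldsymbol{x}^{t+1}=g(\boldsymbol{A}\boldsymbol{z}^t+\boldsymbol{B}u^t)$,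 $\boldsymbol{x}^t=g(\boldsymbol{z}^t)$, and the expectation is taken over all states $\boldsymbol{z}^t\in\mathbb{R}^n$ and all admissible inputs $u^t\in(-U,U)$ (with unknown distributions). Define $\tau=f\circ g:\mathbb{R}^n\to\mathbb{R}^n$. Then $\tau(\boldsymbol{z})=\frac{\hat b}{b}\,\boldsymbol{z}$ for all $\boldsymbol{z}\in\mathbb{R}^n$, and $\boldsymbol{\hat A}=\boldsymbol{A}$.
   Context: This is a single-input linear system $q^{t+n}-a_nq^{t+n-1}-\cdots-a_1q^t=bu^t$ written in controllable canonical form with state $\boldsymbol{z}^t=(q^t,\dots,q^{t+n-1})^T$. The order $n$ is known. The input $u^t$ can be set to any value in $(-U,U)$ at any state. *)

theory Defs
  imports "HOL-Analysis.Analysis"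
begin

text \<open>State space R^n is modelled as real^'n, where the finite index type 'n carries a
  linear order identifying it with 1..n. idx i is the 0-based position of index i.\<close>

definition idx :: "'n::{finite,linorder} \<Rightarrow> nat" where
  "idx i = card {j. j < i}"

definition companion :: "real^'n::{finite,linorder} \<Rightarrow> real^'n::{finite,linorder}^'n::{finite,linorder}" where
  "companion a = (\<chi> i j. if idx i + 1 < CARD('n)
                          then (if idx j = idx i + 1 then 1 else 0)
                          else a $ j)"

definition lastvec :: "real \<Rightarrow> real^'n::{finite,linorder}" where
  "lastvec c = (\<chi> i. if idx i + 1 = CARD('n) then c else 0)"

end

theory Submission
  imports Defs
begin


lemma idx_less_mono:
  fixes i j :: "'n::{finite,linorder}"
  assumes "i < j" shows "idx i < idx j"
  unfolding idx_def
proof (rule psubset_card_mono)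
  show "finite {k. k < j}" by simp
  show "{k. k < i} \<subset> {k. k < j}" using assms by auto
qed

lemma inj_idx: "inj (idx :: 'n::{finite,linorder} \<Rightarrow> nat)"
proof (rule injI)
  fix i j :: 'n assume "idx i = idx j"
  then show "i = j" using idx_less_mono[of i j] idx_less_mono[of j i]
    by (metis less_irrefl neqE)
qed

lemma idx_less: "idx (i::'n::{finite,linorder}) < CARD('n)"
  unfolding idx_def
proof (rule psubset_card_mono)
  show "finite (UNIV::'n set)" by simp
  show "{k. k < i} \<subset> UNIV" by auto
qed

lemma idx_range: "range (idx :: 'n::{finite,linorder} \<Rightarrow> nat) = {..<CARD('n)}"
proof (rule card_subset_eq)
  show "finite {..<CARD('n)}" by simp
  show "range (idx :: 'n \<Rightarrow> nat) \<subseteq> {..<CARD('n)}" using idx_less by auto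
  show "card (range (idx :: 'n \<Rightarrow> nat)) = card {..<CARD('n)}"
    using card_image[OF inj_idx] by simp
qed

definition ix :: "nat \<Rightarrow> 'n::{finite,linorder}" where "ix k = inv idx k"

lemma idx_ix: "k < CARD('n::{finite,linorder}) \<Longrightarrow> idx (ix k :: 'n) = k"
  unfolding ix_def by (metis f_inv_into_f idx_range lessThan_iff)

lemma ix_idx: "ix (idx i) = i"
  unfolding ix_def by (simp add: inj_idx)

lemma idx_eq_iff: "(idx i = k) \<longleftrightarrow> (k < CARD('n::{finite,linorder}) \<and> i = (ix k :: 'n))"
  using idx_less[of i] ix_idx[of i] idx_ix[of k] by auto



lemma card_pos': "0 < CARD('n::{finite,linorder})" by simp

lemma if01_mult: "(if P then (1::real) else 0) * x = (if P then x else 0)" by simp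

lemma mv_axis: "(M *v axis j (1::real)) $ i = M $ i $ j"
  unfolding matrix_vector_mult_def axis_def
  by (simp add: mult.commute[of _ "if _ then _ else _"] if01_mult)

lemma comp_apply:
  "(companion a *v z) $ (i::'n::{finite,linorder}) =
     (if idx i + 1 < CARD('n) then z $ ix (idx i + 1) else (\<Sum>j\<in>UNIV. a$j * z$j))"
proof (cases "idx i + 1 < CARD('n)")
  case True
  have "(companion a *v z) $ i = (\<Sum>j\<in>UNIV. (if j = ix (idx i + 1) then z$j else 0))"
    unfolding matrix_vector_mult_def companion_def using True
    by (auto intro!: sum.cong simp: idx_eq_iff if01_mult)
  also have "\<dots> = z $ ix (idx i + 1)" by (simp add: sum.delta')
  finally show ?thesis using True by simp
next
  case False
  then show ?thesis unfolding matrix_vector_mult_def companion_def by simp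
qed

abbreviation lastix :: "'n::{finite,linorder}" where "lastix \<equiv> ix (CARD('n) - 1)"

lemma idx_last_iff: "(idx i + 1 = CARD('n)) \<longleftrightarrow> (i::'n::{finite,linorder}) = lastix"
  using idx_eq_iff[of i "CARD('n) - 1"] card_pos'[where 'n='n] by auto

lemma lastvec_eq: "lastvec c = c *\<^sub>R (axis (lastix::'n::{finite,linorder}) 1)"
  unfolding lastvec_def by (auto simp: vec_eq_iff axis_def idx_last_iff[simplified])

lemma comp_axis:
  "companion a *v axis (j::'n::{finite,linorder}) 1 =
     (if idx j = 0 then 0 else axis (ix (idx j - 1)) 1) + a$j *\<^sub>R axis lastix 1"
proof -
  have "(companion a *v axis j 1) $ i =
     ((if idx j = 0 then 0 else axis (ix (idx j - 1)) 1) + a$j *\<^sub>R axis lastix 1) $ i" for i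
  proof (cases "idx i + 1 < CARD('n)")
    case True
    note mv = mv_axis[of "companion a" j i]
    from True have "i \<noteq> lastix" using idx_last_iff[of i] by auto
    moreover have "(ix (idx j - 1) = i) \<longleftrightarrow> (idx j = idx i + 1)" if "idx j \<noteq> 0"
    proof -
      have "idx j - 1 < CARD('n)" using idx_less[of j] by linarith
      then have "(ix (idx j - 1) = i) \<longleftrightarrow> idx i = idx j - 1" using idx_eq_iff[of i "idx j - 1"] by auto
      then show ?thesis using that by linarith
    qed
    ultimately show ?thesis using True
      unfolding mv by (cases "idx j = 0") (auto simp: companion_def axis_def ix_idx)
  next
    case False
    note mv = mv_axis[of "companion a" j i]
    from False have "i = lastix" using idx_last_iff[of i] idx_less[of i] by auto
    moreover have nl: "ix (idx j - 1) \<noteq> (lastix::'n)" if "idx j \<noteq> 0" for j :: 'n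
    proof
      assume "ix (idx j - 1) = (lastix::'n)"
      then have "idx (ix (idx j - 1) :: 'n) = CARD('n) - 1" using idx_ix[of "CARD('n) - 1", where 'n='n] by simp
      moreover have "idx (ix (idx j - 1) :: 'n) = idx j - 1" using idx_less[of j] idx_ix[of "idx j - 1", where 'n='n] by simp
      ultimately show False using that idx_less[of j] by linarith
    qed
    ultimately show ?thesis using False nl[of j] nl[of j, symmetric]
      unfolding mv by (cases "idx j = 0") (auto simp: companion_def axis_def)
  qed
  then show ?thesis by (simp add: vec_eq_iff)
qed



definition nxt :: "'n::{finite,linorder} \<Rightarrow> 'n" where "nxt i = ix (idx i + 1)"
definition prv :: "'n::{finite,linorder} \<Rightarrow> 'n" where "prv i = ix (idx i - 1)"

lemma idx_nxt: "idx i + 1 < CARD('n) \<Longrightarrow> idx (nxt (i::'n::{finite,linorder})) = idx i + 1"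
  unfolding nxt_def by (rule idx_ix)

lemma idx_prv: "idx (prv (i::'n::{finite,linorder})) = idx i - 1"
  unfolding prv_def using idx_less[of i] by (intro idx_ix) linarith

lemma prv_nxt: "idx i + 1 < CARD('n) \<Longrightarrow> prv (nxt (i::'n::{finite,linorder})) = i"
  unfolding prv_def using idx_nxt[of i] by (simp add: ix_idx)

lemma nxt_prv: "idx i \<noteq> 0 \<Longrightarrow> nxt (prv (i::'n::{finite,linorder})) = i"
  unfolding nxt_def using idx_prv[of i] by (simp add: ix_idx)

lemma not_last_iff: "(i::'n::{finite,linorder}) \<noteq> lastix \<longleftrightarrow> idx i + 1 < CARD('n)"
  using idx_last_iff[of i] idx_less[of i] by auto

lemma idx_inj_eq: "idx (i::'n::{finite,linorder}) = idx j \<longleftrightarrow> i = j"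
  using inj_idx by (auto dest: injD)

lemma comp_inj:
  fixes a :: "real^'n::{finite,linorder}"
  assumes a0: "\<forall>i. idx i = 0 \<longrightarrow> a $ i \<noteq> 0"
  shows "inj ((*v) (companion a))"
proof (rule injI)
  fix x y :: "real^'n::{finite,linorder}" assume "companion a *v x = companion a *v y"
  then have v0: "companion a *v (x - y) = 0" by (simp add: algebra_simps)
  define v where "v = x - y"
  have v0: "companion a *v v = 0" using v0 v_def by simp
  have hi: "v $ i = 0" if "idx i \<noteq> 0" for i
  proof -
    have "idx (prv i) + 1 < CARD('n)" using idx_prv[of i] idx_less[of i] that by linarith
    then have "(companion a *v v) $ prv i = v $ i"
      unfolding comp_apply using nxt_prv[OF that, unfolded nxt_def] by simp
    then show ?thesis using v0 by simp
  qed
  have "v $ i = 0" if "idx i = 0" for i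
  proof -
    have "\<not> idx (lastix::'n) + 1 < CARD('n)" using not_last_iff[of "lastix::'n"] by simp
    then have "(companion a *v v) $ lastix = (\<Sum>j\<in>UNIV. a$j * v$j)" by (simp add: comp_apply)
    also have "\<dots> = (\<Sum>j\<in>UNIV. if j = i then a$i * v$i else 0)"
    proof (rule sum.cong)
      fix j show "a$j * v$j = (if j = i then a$i * v$i else 0)"
        using hi[of j] that idx_inj_eq[of j i] by auto
    qed simp
    also have "\<dots> = a$i * v$i" by simp
    finally show ?thesis using v0 a0 that by simp
  qed
  with hi have "v = 0" by (auto simp: vec_eq_iff)
  then show "x = y" using v_def by simp
qed

theorem theorem1:
  fixes a ahat :: "real^'n::{finite,linorder}"
    and b bhat U :: real
    and g :: "real^'n::{finite,linorder} \<Rightarrow> real^'m"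
    and f :: "real^'m \<Rightarrow> real^'n::{finite,linorder}"
  assumes "U > 0"
    and "\<forall>i. idx i = 0 \<longrightarrow> a $ i \<noteq> 0"
    and "b \<noteq> 0"
    and "(\<Sum>i\<in>UNIV. a $ i) \<noteq> 1"
    and "CARD('n) \<le> CARD('m)"
    and "inj g"
    and "g differentiable_on UNIV"
    and "bhat \<noteq> 0"
    and "f differentiable_on range g"
    and "\<forall>z u. -U < u \<and> u < U \<longrightarrow>
           f (g (companion a *v z + u *\<^sub>R lastvec b))
             = companion ahat *v f (g z) + u *\<^sub>R lastvec bhat"
  shows "(\<forall>z. (f \<circ> g) z = (bhat / b) *\<^sub>R z) \<and> companion ahat = companion a"
proof -
  note U = assms(1) and a0 = assms(2) and b0 = assms(3) and asum = assms(4)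
    and bh0 = assms(8) and H = assms(10)
  define T where "T = f \<circ> g"
  define A where "A = companion a"
  define Ah where "Ah = companion ahat"
  define c where "c = bhat / b"
  define L where "L = (lastix :: 'n)"
  have c0: "c \<noteq> 0" using b0 bh0 c_def by simp
  have H': "T (A *v z + u *\<^sub>R lastvec b) = Ah *v T z + u *\<^sub>R lastvec bhat"
    if "\<bar>u\<bar> < U" for z u
    using H that unfolding T_def A_def Ah_def by (simp add: abs_less_iff)
  have h1: "T (A *v z) = Ah *v T z" for z using H'[of 0 z] U by simp
  have surjA: "surj ((*v) A)"
    unfolding A_def by (rule linear_inj_imp_surj[OF matrix_vector_mul_linear comp_inj[OF a0]])
  have h3: "T (w + u *\<^sub>R lastvec b) = T w + u *\<^sub>R lastvec bhat" if "\<bar>u\<bar> < U" for w u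
  proof -
    obtain z where z: "w = A *v z" using surjA by (metis surjD)
    show ?thesis using H'[OF that, of z] h1[of z] z by simp
  qed
  have h4n: "\<forall>s w. \<bar>s\<bar> < real (Suc N) * U \<longrightarrow> T (w + s *\<^sub>R lastvec b) = T w + s *\<^sub>R lastvec bhat" for N
  proof (induction N)
    case 0 then show ?case using h3 by simp
  next
    case (Suc N)
    show ?case
    proof (intro allI impI)
      fix s w assume s: "\<bar>s\<bar> < real (Suc (Suc N)) * U"
      define u where "u = s / real (Suc (Suc N))"
      define s' where "s' = s - u"
      have u: "\<bar>u\<bar> < U" using s unfolding u_def by (simp add: field_simps abs_divide)
      have s'e: "s' = real (Suc N) * u" unfolding s'_def u_def by (simp add: field_simps)
      have s': "\<bar>s'\<bar> < real (Suc N) * U" using u s'e by (simp add: abs_mult)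
      have "T (w + s *\<^sub>R lastvec b) = T ((w + s' *\<^sub>R lastvec b) + u *\<^sub>R lastvec b)"
        unfolding s'_def by (simp add: algebra_simps)
      also have "\<dots> = T (w + s' *\<^sub>R lastvec b) + u *\<^sub>R lastvec bhat" using h3[OF u] by simp
      also have "\<dots> = T w + s' *\<^sub>R lastvec bhat + u *\<^sub>R lastvec bhat" using Suc.IH s' by simp
      also have "\<dots> = T w + s *\<^sub>R lastvec bhat" unfolding s'_def by (simp add: algebra_simps)
      finally show "T (w + s *\<^sub>R lastvec b) = T w + s *\<^sub>R lastvec bhat" .
    qed
  qed
  have h4: "T (w + s *\<^sub>R lastvec b) = T w + s *\<^sub>R lastvec bhat" for w s
  proof -
    obtain N where "\<bar>s\<bar> / U < real N" using reals_Archimedean2 by blast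
    then have "\<bar>s\<bar> < real (Suc N) * U" using U by (simp add: field_simps)
    then show ?thesis using h4n by blast
  qed
  have R2: "T (w + s *\<^sub>R axis L 1) $ i = T w $ i + (if i = L then c * s else 0)" for w s i
  proof -
    have "s *\<^sub>R axis L 1 = (s / b) *\<^sub>R lastvec b" using b0 unfolding lastvec_eq L_def by simp
    then have "T (w + s *\<^sub>R axis L 1) = T w + (s / b) *\<^sub>R lastvec bhat" using h4 by simp
    also have "\<dots> = T w + (c * s) *\<^sub>R axis L 1" unfolding lastvec_eq L_def c_def by simp
    finally show ?thesis by (simp add: axis_def)
  qed
  have F: "T v $ i = T (A *v v) $ prv i" if "idx i \<noteq> 0" for v i
  proof -
    have "idx (prv i) + 1 < CARD('n)" using idx_prv[of i] idx_less[of i] that by linarith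
    then have "(Ah *v T v) $ prv i = T v $ i"
      unfolding Ah_def comp_apply using nxt_prv[OF that, unfolded nxt_def] by simp
    then show ?thesis using h1 by simp
  qed
  have linA: "A *v (z + s *\<^sub>R axis j 1) = A *v z + s *\<^sub>R ((if idx j = 0 then 0 else axis (prv j) 1) + a$j *\<^sub>R axis L 1)" for z s j
    unfolding A_def L_def prv_def by (simp add: algebra_simps comp_axis)
  define S where "S i j \<longleftrightarrow> (\<forall>w s. T (w + s *\<^sub>R axis j 1) $ i = T w $ i + (if i = j then c * s else 0))" for i j
  have prvL: "prv i \<noteq> L" if "idx i \<noteq> 0" for i
    using not_last_iff[of "prv i"] idx_prv[of i] idx_less[of i] that unfolding L_def by auto
  have down: "S i j" if "idx i \<noteq> 0" "idx j \<noteq> 0" "S (prv i) (prv j)" for i j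
    unfolding S_def
  proof (intro allI)
    fix w s
    have "A *v (w + s *\<^sub>R axis j 1) = A *v w + s *\<^sub>R axis (prv j) 1 + (s * a$j) *\<^sub>R axis L 1"
      using linA[of w s j] that(2) by (simp add: scaleR_add_right add.assoc)
    then have "T (w + s *\<^sub>R axis j 1) $ i = T (A *v w + s *\<^sub>R axis (prv j) 1 + (s * a$j) *\<^sub>R axis L 1) $ prv i"
      using F[OF that(1), of "w + s *\<^sub>R axis j 1"] by simp
    also have "\<dots> = T (A *v w + s *\<^sub>R axis (prv j) 1) $ prv i" using R2 prvL[OF that(1)] by simp
    also have "\<dots> = T (A *v w) $ prv i + (if prv i = prv j then c * s else 0)"
      using that(3) unfolding S_def by simp
    also have "\<dots> = T w $ i + (if i = j then c * s else 0)"
    proof -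
      have "prv i = prv j \<longleftrightarrow> i = j"
      proof
        assume "prv i = prv j"
        then have "nxt (prv i) = nxt (prv j)" by simp
        then show "i = j" using nxt_prv[OF that(1)] nxt_prv[OF that(2)] by simp
      qed simp
      then show ?thesis using F[OF that(1), of w] by simp
    qed
    finally show "T (w + s *\<^sub>R axis j 1) $ i = T w $ i + (if i = j then c * s else 0)" .
  qed
  have base0: "S i j" if "idx i \<noteq> 0" "idx j = 0" for i j
    unfolding S_def
  proof (intro allI)
    fix w s
    have "A *v (w + s *\<^sub>R axis j 1) = A *v w + (s * a$j) *\<^sub>R axis L 1"
      using linA[of w s j] that(2) by simp
    then have "T (w + s *\<^sub>R axis j 1) $ i = T (A *v w + (s * a$j) *\<^sub>R axis L 1) $ prv i"
      using F[OF that(1), of "w + s *\<^sub>R axis j 1"] by simp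
    also have "\<dots> = T (A *v w) $ prv i" using R2 prvL[OF that(1)] by simp
    also have "\<dots> = T w $ i" using F[OF that(1), of w] by simp
    finally show "T (w + s *\<^sub>R axis j 1) $ i = T w $ i + (if i = j then c * s else 0)"
      using that by auto
  qed
  have up: "S i j" if "idx i + 1 < CARD('n)" "idx j + 1 < CARD('n)" "S (nxt i) (nxt j)" for i j
    unfolding S_def
  proof (intro allI)
    fix w s
    obtain z where z: "w = A *v z" using surjA by (metis surjD)
    have ni: "idx (nxt i) \<noteq> 0" "idx (nxt j) \<noteq> 0" using idx_nxt[OF that(1)] idx_nxt[OF that(2)] by auto
    have iL: "i \<noteq> L" using that(1) not_last_iff[of i] unfolding L_def by simp
    have eA: "A *v (z + s *\<^sub>R axis (nxt j) 1) = (w + s *\<^sub>R axis j 1) + (s * a $ nxt j) *\<^sub>R axis L 1"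
      using linA[of z s "nxt j"] ni(2) prv_nxt[OF that(2)] z by (simp add: scaleR_add_right add.assoc)
    have e1: "T (w + s *\<^sub>R axis j 1) $ i = T (z + s *\<^sub>R axis (nxt j) 1) $ nxt i"
    proof -
      have "T (z + s *\<^sub>R axis (nxt j) 1) $ nxt i = T (A *v (z + s *\<^sub>R axis (nxt j) 1)) $ i"
        using F[OF ni(1), of "z + s *\<^sub>R axis (nxt j) 1"] prv_nxt[OF that(1)] by simp
      also have "\<dots> = T ((w + s *\<^sub>R axis j 1) + (s * a $ nxt j) *\<^sub>R axis L 1) $ i"
        by (simp only: eA)
      also have "\<dots> = T (w + s *\<^sub>R axis j 1) $ i" using R2 iL by simp
      finally show ?thesis by simp
    qed
    have e2: "T z $ nxt i = T w $ i" using F[OF ni(1), of z] prv_nxt[OF that(1)] z by simp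
    have e3: "nxt i = nxt j \<longleftrightarrow> i = j"
    proof
      assume "nxt i = nxt j"
      then have "prv (nxt i) = prv (nxt j)" by simp
      then show "i = j" using prv_nxt[OF that(1)] prv_nxt[OF that(2)] by simp
    qed simp
    show "T (w + s *\<^sub>R axis j 1) $ i = T w $ i + (if i = j then c * s else 0)"
      using e1 e2 e3 that(3) unfolding S_def by simp
  qed
  have baseL: "S i L" for i unfolding S_def using R2 by simp
  have Sdown: "\<forall>p. q < p \<and> p < CARD('n) \<longrightarrow> S (ix p) (ix q)" for q
  proof (induction q)
    case 0
    show ?case
    proof (intro allI impI)
      fix p assume p: "0 < p \<and> p < CARD('n)"
      show "S (ix p) (ix 0)" using base0[of "ix p" "ix 0"] idx_ix[where 'n='n, of p] idx_ix[where 'n='n, of 0] p by simp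
    qed
  next
    case (Suc q)
    show ?case
    proof (intro allI impI)
      fix p assume p: "Suc q < p \<and> p < CARD('n)"
      have ip: "idx (ix p :: 'n) = p" "idx (ix (Suc q) :: 'n) = Suc q" using idx_ix[where 'n='n] p by auto
      have "prv (ix p :: 'n) = ix (p - 1)" "prv (ix (Suc q) :: 'n) = ix q" unfolding prv_def ip by auto
      moreover have "S (ix (p - 1)) (ix q)"
      proof -
        have "q < p - 1 \<and> p - 1 < CARD('n)" using p by linarith
        then show ?thesis using Suc.IH by blast
      qed
      ultimately show "S (ix p) (ix (Suc q))" using down[of "ix p" "ix (Suc q)"] ip p by simp
    qed
  qed
  have Sup: "\<forall>p q. m = CARD('n) - 1 - q \<and> p \<le> q \<and> q < CARD('n) \<longrightarrow> S (ix p) (ix q)" for m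
  proof (induction m)
    case 0
    show ?case
    proof (intro allI impI)
      fix p q assume pq: "0 = CARD('n) - 1 - q \<and> p \<le> q \<and> q < CARD('n)"
      then have "q = CARD('n) - 1" by auto
      then show "S (ix p) (ix q)" using baseL unfolding L_def by simp
    qed
  next
    case (Suc m)
    show ?case
    proof (intro allI impI)
      fix p q assume pq: "Suc m = CARD('n) - 1 - q \<and> p \<le> q \<and> q < CARD('n)"
      have ip: "idx (ix p :: 'n) = p" "idx (ix q :: 'n) = q" using idx_ix[where 'n='n] pq by auto
      have "nxt (ix p :: 'n) = ix (p + 1)" "nxt (ix q :: 'n) = ix (q + 1)" unfolding nxt_def ip by auto
      moreover have "S (ix (p + 1)) (ix (q + 1))"
      proof -
        have "m = CARD('n) - 1 - (q + 1) \<and> p + 1 \<le> q + 1 \<and> q + 1 < CARD('n)" using pq by linarith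
        then show ?thesis using Suc.IH by blast
      qed
      moreover have "q + 1 < CARD('n)" "p + 1 < CARD('n)" using pq by linarith+
      ultimately show "S (ix p) (ix q)" using up[of "ix p" "ix q"] ip by simp
    qed
  qed
  have Sall: "S i j" for i j
  proof -
    have "S (ix (idx i)) (ix (idx j))"
    proof (cases "idx j < idx i")
      case True then show ?thesis using Sdown idx_less[of i] by blast
    next
      case False then show ?thesis using Sup idx_less[of j] by (metis not_less)
    qed
    then show ?thesis by (simp add: ix_idx)
  qed
  define vJ where "vJ J z = (\<chi> k. if k \<in> J then z $ k else 0)" for J :: "'n::{finite,linorder} set" and z :: "real^'n::{finite,linorder}"
  have aff: "finite J \<Longrightarrow> T (vJ J z) = T 0 + c *\<^sub>R vJ J z" for J z
  proof (induction J rule: finite_induct)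
    case empty
    have "vJ {} z = 0" unfolding vJ_def by (simp add: vec_eq_iff)
    then show ?case by simp
  next
    case (insert j J)
    have e: "vJ (insert j J) z = vJ J z + z $ j *\<^sub>R axis j 1"
      using insert(2) unfolding vJ_def by (auto simp: vec_eq_iff axis_def)
    have "T (vJ (insert j J) z) $ i = (T 0 + c *\<^sub>R vJ (insert j J) z) $ i" for i
    proof -
      have "T (vJ (insert j J) z) $ i = T (vJ J z) $ i + (if i = j then c * z $ j else 0)"
        using Sall[of i j] unfolding e S_def by blast
      also have "\<dots> = (T 0 + c *\<^sub>R vJ (insert j J) z) $ i"
        using insert(3) insert(2) unfolding vJ_def by auto
      finally show ?thesis .
    qed
    then show ?case by (simp add: vec_eq_iff)
  qed
  define d where "d = T 0"
  have Tz: "T z = d + c *\<^sub>R z" for z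
  proof -
    have "vJ UNIV z = z" unfolding vJ_def by (simp add: vec_eq_iff)
    then show ?thesis using aff[of UNIV z] d_def by simp
  qed
  have dfix: "Ah *v d = d" using h1[of 0] Tz[of 0] by simp
  have AAh: "A *v z = Ah *v z" for z
  proof -
    have "d + c *\<^sub>R (A *v z) = Ah *v (d + c *\<^sub>R z)" using h1[of z] Tz by simp
    also have "\<dots> = d + c *\<^sub>R (Ah *v z)" using dfix by (simp add: algebra_simps)
    finally show ?thesis using c0 by simp
  qed
  have AhA: "Ah = A" unfolding matrix_eq using AAh by simp
  have dA: "A *v d = d" using dfix AhA by simp
  have deq: "d $ i = d $ L" for i
  proof -
    have "\<forall>i. CARD('n) - 1 - idx i = m \<longrightarrow> d $ i = d $ L" for m
    proof (induction m)
      case 0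
      show ?case
      proof (intro allI impI)
        fix i :: 'n assume "CARD('n) - 1 - idx i = 0"
        then have "idx i + 1 = CARD('n)" using idx_less[of i] by linarith
        then have "i = L" using idx_last_iff[of i] unfolding L_def by simp
        then show "d $ i = d $ L" by simp
      qed
    next
      case (Suc m)
      show ?case
      proof (intro allI impI)
        fix i :: 'n assume im: "CARD('n) - 1 - idx i = Suc m"
        then have i1: "idx i + 1 < CARD('n)" by linarith
        have "d $ i = (A *v d) $ i" using dA by simp
        also have "\<dots> = d $ nxt i" unfolding A_def comp_apply using i1 by (simp add: nxt_def)
        also have "\<dots> = d $ L"
        proof -
          have "CARD('n) - 1 - idx (nxt i) = m" using im idx_nxt[OF i1] by linarith
          then show ?thesis using Suc.IH by blast
        qed
        finally show "d $ i = d $ L" .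
      qed
    qed
    then show ?thesis by blast
  qed
  have "d $ L = (A *v d) $ L" using dA by simp
  also have "\<dots> = (\<Sum>j\<in>UNIV. a$j * d$j)"
    unfolding A_def comp_apply using not_last_iff[of L] unfolding L_def by auto
  also have "\<dots> = (\<Sum>j\<in>UNIV. a$j * d $ L)"
    by (rule sum.cong[OF refl], rule arg_cong[where f="(*) _"], rule deq)
  also have "\<dots> = (\<Sum>j\<in>UNIV. a$j) * d $ L" by (simp add: sum_distrib_right)
  finally have "(1 - (\<Sum>j\<in>UNIV. a$j)) * d $ L = 0" by (simp add: algebra_simps)
  then have "d $ L = 0" using asum by simp
  then have "d $ i = 0" for i using deq[of i] by simp
  then have d0: "d = 0" by (simp add: vec_eq_iff)
  show ?thesis using Tz d0 AhA unfolding T_def c_def A_def Ah_def by simp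
qed

end
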